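(* Let $H$ be a numerical semigroup, $k$ a field, $R=k[H]$ Gorenstein, $a=\mathrm{a}(R)$, and let $\mathcal{X}_R$ be the set of graded ideals $I$ of $R$ with $R/I$ Gorenstein and $\mu_R(I)\ge 2$. For $I\in\mathcal{X}_R$ set $J=t^{a-\mathrm{a}(R/I)}I\subseteq k[t,t^{-1}]$. Then: (1) $J\in\mathcal{X}_R$ and $\mathrm{a}(R/J)=2a-\mathrm{a}(R/I)$; hence if $\mathrm{a}(R/I)<a$ (resp. $>a$) then $\mathrm{a}(R/J)>a$ (resp. $<a$); (2) $\mathrm{a}(R/I)\in H$, $a\ne\mathrm{a}(R/I)$, and $a-\mathrm{a}(R/I)\in\mathbb{Z}\setminus H$; (3) if $\mathrm{a}(R/I)<a$ then $a-\mathrm{a}(R/I)\in\mathbb{N}\setminus H$; (4) if $\mathrm{a}(R/I)>a$ then $\mathrm{a}(R/I)-a\in\mathbb{N}\setminus H$.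
   Context: $R=k[H]=k[t^h\mid h\in H]\subseteq k[t]$ graded by $\deg t=1$; $\mathrm{a}(R)=\mathrm{c}(H)-1=\max(\mathbb{Z}\setminus H)$ where $\mathrm{c}(H)$ is the conductor of $H$; for an Artinian graded quotient $R/I$, $\mathrm{a}(R/I)$ is the largest $n$ with $[R/I]_n\ne 0$. $R$ Gorenstein is equivalent to $H$ symmetric. $\mu_R(I)$ is the minimal number of generators. *)

theory Defs
  imports "HOL-Computational_Algebra.Formal_Laurent_Series"
begin

text \<open>Everything lives inside the Laurent series ring k((t)); the Laurent polynomial
  ring k[t,t^-1] is the set of Laurent series with finite support, and
  R = k[H] is the set of Laurent series with finite support contained in H.\<close>

definition numerical_semigroup :: "nat set \<Rightarrow> bool" where
  "numerical_semigroup H \<longleftrightarrow> 0 \<in> H \<and> (\<forall>x\<in>H. \<forall>y\<in>H. x + y \<in> H) \<and> finite (UNIV - H)"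

text \<open>a(R) = c(H) - 1 = max (Z \ H).\<close>
definition a_inv :: "nat set \<Rightarrow> int" where
  "a_inv H = (GREATEST z::int. z \<notin> int ` H)"

definition symmetric_sg :: "nat set \<Rightarrow> bool" where
  "symmetric_sg H \<longleftrightarrow> (\<forall>z::int. z \<in> int ` H \<longleftrightarrow> a_inv H - z \<notin> int ` H)"

definition semigroup_ring :: "nat set \<Rightarrow> 'k::field fls set" where
  "semigroup_ring H = {f. finite {n. fls_nth f n \<noteq> 0} \<and> (\<forall>n. fls_nth f n \<noteq> 0 \<longrightarrow> n \<in> int ` H)}"

definition homogeneous_of_deg :: "int \<Rightarrow> 'k::field fls \<Rightarrow> bool" where
  "homogeneous_of_deg d f \<longleftrightarrow> (\<forall>n. fls_nth f n \<noteq> 0 \<longrightarrow> n = d)"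

definition is_ideal :: "'k::field fls set \<Rightarrow> 'k fls set \<Rightarrow> bool" where
  "is_ideal R I \<longleftrightarrow> I \<subseteq> R \<and> 0 \<in> I \<and> (\<forall>f\<in>I. \<forall>g\<in>I. f + g \<in> I) \<and> (\<forall>r\<in>R. \<forall>f\<in>I. r * f \<in> I)"

definition is_graded_ideal :: "'k::field fls set \<Rightarrow> 'k fls set \<Rightarrow> bool" where
  "is_graded_ideal R I \<longleftrightarrow> is_ideal R I \<and>
     (\<forall>f\<in>I. \<forall>n. fls_const (fls_nth f n) * fls_X_intpow n \<in> I)"

definition ideal_gen :: "'k::field fls set \<Rightarrow> 'k fls set \<Rightarrow> 'k fls set" where
  "ideal_gen R G = {\<Sum>g\<in>G. c g * g | c. \<forall>g\<in>G. c g \<in> R}"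

definition mu :: "'k::field fls set \<Rightarrow> 'k fls set \<Rightarrow> nat" where
  "mu R I = (LEAST m. \<exists>G. finite G \<and> card G = m \<and> G \<subseteq> I \<and> ideal_gen R G = I)"

text \<open>[R/I]_n \<noteq> 0 : some homogeneous element of R of degree n is not in I.\<close>
definition quot_comp_nonzero :: "'k::field fls set \<Rightarrow> 'k fls set \<Rightarrow> int \<Rightarrow> bool" where
  "quot_comp_nonzero R I n \<longleftrightarrow> (\<exists>f\<in>R. homogeneous_of_deg n f \<and> f \<notin> I)"

definition a_quot :: "'k::field fls set \<Rightarrow> 'k fls set \<Rightarrow> int" where
  "a_quot R I = (GREATEST n. quot_comp_nonzero R I n)"

definition max_ideal :: "'k::field fls set \<Rightarrow> 'k fls set" where
  "max_ideal R = {f\<in>R. fls_nth f 0 = 0}"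

definition colon :: "'k::field fls set \<Rightarrow> 'k fls set \<Rightarrow> 'k fls set \<Rightarrow> 'k fls set" where
  "colon R I M = {f\<in>R. \<forall>m\<in>M. f * m \<in> I}"

text \<open>R/I is Artinian: finite-dimensional over k.\<close>
definition artinian_quot :: "'k::field fls set \<Rightarrow> 'k fls set \<Rightarrow> bool" where
  "artinian_quot R I \<longleftrightarrow> (\<exists>B. finite B \<and> B \<subseteq> R \<and>
      (\<forall>f\<in>R. \<exists>c. f - (\<Sum>b\<in>B. fls_const (c b) * b) \<in> I))"

text \<open>Artinian graded local R/I is Gorenstein iff its socle (I :_R m)/I is
  one-dimensional over k.\<close>
definition gorenstein_quot :: "'k::field fls set \<Rightarrow> 'k fls set \<Rightarrow> bool" where
  "gorenstein_quot R I \<longleftrightarrow> artinian_quot R I \<and>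
     (\<exists>s\<in>colon R I (max_ideal R) - I. \<forall>f\<in>colon R I (max_ideal R). \<exists>c. f - fls_const c * s \<in> I)"

definition X_R :: "'k::field fls set \<Rightarrow> 'k fls set set" where
  "X_R R = {I. is_graded_ideal R I \<and> gorenstein_quot R I \<and> mu R I \<ge> 2}"

end

theory Submission imports Defs begin
unbundle fps_syntax

definition supp :: "'k::field fls \<Rightarrow> int set" where
  "supp f = {n. f $$ n \<noteq> 0}"

definition monid :: "int set \<Rightarrow> 'k::field fls set" where
  "monid E = {f. finite (supp f) \<and> supp f \<subseteq> E}"

lemma shift1_mult[simp]: "fls_shift m (1::'k::field fls) * f = fls_shift m f"
  using fls_X_intpow_times_conv_shift(1)[of "-m" f] by simp

lemma X_nth[simp]: "(fls_X_intpow m :: 'k::field fls) $$ n = (if n = m then 1 else 0)"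
  by simp

lemma Xmult_nth[simp]: "(fls_X_intpow c * (f::'k::field fls)) $$ n = f $$ (n - c)"
  by (simp add: fls_X_intpow_times_conv_shift)

lemma constX_nth[simp]: "(fls_const x * fls_X_intpow m :: 'k::field fls) $$ n = (if n = m then x else 0)"
  by simp

lemma XX: "(fls_X_intpow i :: 'k::field fls) * fls_X_intpow j = fls_X_intpow (i+j)"
  by (rule fls_X_intpow_times_fls_X_intpow)

lemma XXinv: "(fls_X_intpow (-c) :: 'k::field fls) * (fls_X_intpow c * f) = f"
  by (simp add: fls_X_intpow_times_conv_shift)

lemma XXinv2: "(fls_X_intpow c :: 'k::field fls) * (fls_X_intpow (-c) * f) = f"
  by (simp add: fls_X_intpow_times_conv_shift)

lemma ns_0: "numerical_semigroup H \<Longrightarrow> (0::int) \<in> int ` H"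
  unfolding numerical_semigroup_def by force

lemma ns_add: "numerical_semigroup H \<Longrightarrow> x \<in> int ` H \<Longrightarrow> y \<in> int ` H \<Longrightarrow> x + y \<in> int ` H"
  unfolding numerical_semigroup_def by (auto simp flip: of_nat_add)

lemma ns_nonneg: "x \<in> int ` H \<Longrightarrow> x \<ge> 0"
  by auto

lemma R_iff: "f \<in> semigroup_ring H \<longleftrightarrow> finite (supp f) \<and> supp f \<subseteq> int ` H"
  unfolding semigroup_ring_def supp_def by auto

lemma X_in_R: "n \<in> int ` H \<Longrightarrow> (fls_X_intpow n :: 'k::field fls) \<in> semigroup_ring H"
  unfolding R_iff supp_def by auto

lemma const_in_R: "numerical_semigroup H \<Longrightarrow> (fls_const c :: 'k::field fls) \<in> semigroup_ring H"
  unfolding R_iff supp_def using ns_0[of H] by (auto intro: finite_subset[of _ "{0}"])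

lemma monid_R: "E \<subseteq> int ` H \<Longrightarrow> monid E \<subseteq> (semigroup_ring H :: 'k::field fls set)"
  unfolding monid_def by (auto simp: R_iff)

lemma fls_decomp:
  fixes f :: "'k::field fls"
  assumes "finite (supp f)"
  shows "f = (\<Sum>m\<in>supp f. fls_const (f $$ m) * fls_X_intpow m)"
proof (rule fls_eqI)
  fix n
  have "(\<Sum>m\<in>supp f. (fls_const (f $$ m) * fls_X_intpow m) $$ n) = (\<Sum>m\<in>supp f. if n = m then f $$ m else 0)"
    by (rule sum.cong) auto
  also have "\<dots> = f $$ n" using assms by (auto simp: supp_def)
  finally show "f $$ n = (\<Sum>m\<in>supp f. fls_const (f $$ m) * fls_X_intpow m) $$ n"
    by (simp add: fls_nth_sum)
qed

lemma sum_in_ideal: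
  assumes "is_ideal R I" "\<forall>x\<in>S. g x \<in> I"
  shows "sum g S \<in> I"
proof (cases "finite S")
  case True
  then show ?thesis using assms(2)
  proof (induction S rule: finite_induct)
    case empty then show ?case using assms(1) by (simp add: is_ideal_def)
  next
    case (insert x F) then show ?case using assms(1) by (simp add: is_ideal_def)
  qed
next
  case False then show ?thesis using assms(1) by (simp add: is_ideal_def)
qed

lemma graded_coeff:
  fixes I :: "'k::field fls set"
  assumes ns: "numerical_semigroup H" and gi: "is_graded_ideal (semigroup_ring H) I"
    and f: "f \<in> I" and n: "f $$ n \<noteq> 0"
  shows "fls_X_intpow n \<in> I"
proof -
  have 1: "fls_const (f $$ n) * fls_X_intpow n \<in> I" using gi f by (simp add: is_graded_ideal_def)
  have 2: "fls_const (inverse (f $$ n)) \<in> semigroup_ring H" by (rule const_in_R[OF ns])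
  have "fls_const (inverse (f $$ n)) * (fls_const (f $$ n) * fls_X_intpow n) \<in> I"
    using gi 1 2 unfolding is_graded_ideal_def is_ideal_def by blast
  moreover have "fls_const (inverse (f $$ n)) * (fls_const (f $$ n) * fls_X_intpow n) = (fls_X_intpow n :: 'k fls)"
    using n by (simp add: mult.assoc[symmetric])
  ultimately show ?thesis by simp
qed

lemma supp_in_I:
  fixes I :: "'k::field fls set"
  assumes ns: "numerical_semigroup H" and id: "is_ideal (semigroup_ring H) I"
    and fin: "finite (supp f)" and s: "\<forall>n\<in>supp f. fls_X_intpow n \<in> I"
  shows "f \<in> I"
proof -
  have "(\<Sum>m\<in>supp f. fls_const (f $$ m) * fls_X_intpow m) \<in> I"
    apply (rule sum_in_ideal[OF id])
    using s id const_in_R[OF ns] unfolding is_ideal_def by blast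
  then show ?thesis using fls_decomp[OF fin] by simp
qed

lemma I_eq_monid:
  fixes I :: "'k::field fls set"
  assumes ns: "numerical_semigroup H" and gi: "is_graded_ideal (semigroup_ring H) I"
  shows "I = monid {n. fls_X_intpow n \<in> I}"
proof
  show "I \<subseteq> monid {n. fls_X_intpow n \<in> I}"
  proof
    fix f assume f: "f \<in> I"
    then have "f \<in> semigroup_ring H" using gi by (auto simp: is_graded_ideal_def is_ideal_def)
    then have "finite (supp f)" by (simp add: R_iff)
    moreover have "supp f \<subseteq> {n. fls_X_intpow n \<in> I}"
      using graded_coeff[OF ns gi f] by (auto simp: supp_def)
    ultimately show "f \<in> monid {n. fls_X_intpow n \<in> I}" by (simp add: monid_def)
  qed
  show "monid {n. fls_X_intpow n \<in> I} \<subseteq> I"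
  proof
    fix f assume "f \<in> (monid {n. fls_X_intpow n \<in> I} :: 'k fls set)"
    then show "f \<in> I" using supp_in_I[OF ns, of I f] gi by (auto simp: monid_def is_graded_ideal_def)
  qed
qed

lemma qcn_monid:
  fixes E :: "int set"
  assumes "E \<subseteq> int ` H"
  shows "quot_comp_nonzero (semigroup_ring H) (monid E :: 'k::field fls set) n \<longleftrightarrow> n \<in> int ` H \<and> n \<notin> E"
proof
  assume "quot_comp_nonzero (semigroup_ring H) (monid E :: 'k::field fls set) n"
  then obtain f :: "'k fls" where f: "f \<in> semigroup_ring H" "homogeneous_of_deg n f" "f \<notin> monid E"
    unfolding quot_comp_nonzero_def by blast
  from f(1) have fin: "finite (supp f)" and sH: "supp f \<subseteq> int ` H" by (auto simp: R_iff)
  from f(3) fin obtain m where m: "f $$ m \<noteq> 0" "m \<notin> E" by (auto simp: monid_def supp_def)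
  with f(2) have "m = n" by (simp add: homogeneous_of_deg_def)
  with m sH show "n \<in> int ` H \<and> n \<notin> E" by (auto simp: supp_def)
next
  assume "n \<in> int ` H \<and> n \<notin> E"
  then show "quot_comp_nonzero (semigroup_ring H) (monid E :: 'k::field fls set) n"
    unfolding quot_comp_nonzero_def
    by (intro bexI[of _ "fls_X_intpow n"]) (auto simp: homogeneous_of_deg_def monid_def supp_def intro: X_in_R)
qed

lemma I_structure:
  fixes I :: "'k::field fls set"
  assumes ns: "numerical_semigroup H" and gi: "is_graded_ideal (semigroup_ring H) I"
    and gor: "gorenstein_quot (semigroup_ring H) I"
  shows "a_quot (semigroup_ring H) I \<in> int ` H \<and>
         I = monid {n \<in> int ` H. a_quot (semigroup_ring H) I - n \<notin> int ` H}"
proof -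
  define R where "R = (semigroup_ring H :: 'k fls set)"
  define E where "E = {n. fls_X_intpow n \<in> I}"
  define HZ where "HZ = int ` H"
  have id: "is_ideal R I" using gi by (simp add: R_def is_graded_ideal_def)
  have IR: "I \<subseteq> R" using id by (simp add: is_ideal_def)
  have Imon: "I = monid E" unfolding E_def by (rule I_eq_monid[OF ns gi])
  have EH: "E \<subseteq> HZ"
  proof
    fix n assume "n \<in> E"
    then have "fls_X_intpow n \<in> R" using IR by (auto simp: E_def)
    then have "supp (fls_X_intpow n :: 'k fls) \<subseteq> HZ" by (simp add: R_iff R_def HZ_def)
    then show "n \<in> HZ" by (auto simp: supp_def)
  qed
  have Ecl: "n + h \<in> E" if "n \<in> E" "h \<in> HZ" for n h
  proof -
    have "fls_X_intpow h \<in> R" using that(2) X_in_R[of h H] by (simp add: R_def HZ_def)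
    then have "fls_X_intpow h * fls_X_intpow n \<in> I"
      using id that(1) unfolding is_ideal_def E_def by blast
    then show ?thesis by (simp add: E_def XX add.commute)
  qed
  have HZ0: "0 \<in> HZ" using ns_0[OF ns] by (simp add: HZ_def)
  have HZadd: "x + y \<in> HZ" if "x \<in> HZ" "y \<in> HZ" for x y using ns_add[OF ns] that by (simp add: HZ_def)
  have HZnn: "x \<ge> 0" if "x \<in> HZ" for x using that by (auto simp: HZ_def)
  define S where "S = HZ - E"
  obtain B where B: "finite B" "B \<subseteq> R" "\<forall>f\<in>R. \<exists>c. f - (\<Sum>b\<in>B. fls_const (c b) * b) \<in> I"
    using gor by (auto simp: gorenstein_quot_def artinian_quot_def R_def)
  define N where "N = Max (insert 0 (\<Union>b\<in>B. supp b))"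
  have finU: "finite (insert 0 (\<Union>b\<in>B. supp b))"
    using B(1,2) by (auto simp: R_iff R_def)
  have Sbound: "n \<le> N" if "n \<in> S" for n
  proof (rule ccontr)
    assume "\<not> n \<le> N"
    then have nb: "b $$ n = 0" if "b \<in> B" for b
      using Max_ge[OF finU, of n] that by (auto simp: N_def supp_def)
    have "fls_X_intpow n \<in> R" using that X_in_R by (auto simp: S_def HZ_def R_def)
    then obtain c where c: "fls_X_intpow n - (\<Sum>b\<in>B. fls_const (c b) * b) \<in> I" using B(3) by blast
    have "(fls_X_intpow n - (\<Sum>b\<in>B. fls_const (c b) * b)) $$ n = 1"
      using nb by (simp add: fls_nth_sum)
    then have "fls_X_intpow n \<in> I" using graded_coeff[OF ns gi c] by simp
    then show False using that by (simp add: S_def E_def)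
  qed
  have finS: "finite S"
  proof (rule finite_subset)
    show "S \<subseteq> {0..N}" using Sbound HZnn by (auto simp: S_def)
  qed simp
  obtain s where s: "s \<in> colon R I (max_ideal R)" "s \<notin> I"
    and sall: "\<forall>f\<in>colon R I (max_ideal R). \<exists>c. f - fls_const c * s \<in> I"
    using gor by (auto simp: gorenstein_quot_def R_def)
  have Sne: "S \<noteq> {}"
  proof
    assume "S = {}"
    then have "HZ \<subseteq> E" by (auto simp: S_def)
    moreover have "s \<in> R" using s(1) by (simp add: colon_def)
    ultimately have "s \<in> monid E" by (auto simp: R_iff R_def HZ_def monid_def)
    then show False using s(2) Imon by simp
  qed
  define b where "b = Max S"
  have bS: "b \<in> S" using finS Sne by (simp add: b_def)
  have aq: "a_quot R I = b"
    unfolding a_quot_def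
  proof (rule Greatest_equality)
    show "quot_comp_nonzero R I b" using bS qcn_monid[OF EH[unfolded HZ_def], where 'k='k] Imon
      by (simp add: R_def S_def HZ_def)
    fix y assume "quot_comp_nonzero R I y"
    then have "y \<in> S" using qcn_monid[OF EH[unfolded HZ_def], where 'k='k] Imon
      by (simp add: R_def S_def HZ_def)
    then show "y \<le> b" using finS by (simp add: b_def)
  qed
  have Ivan: "g $$ k = 0" if "g \<in> I" "k \<in> S" for g k
    using graded_coeff[OF ns gi that(1), of k] that(2) by (auto simp: S_def E_def)
  have soc_colon: "fls_X_intpow n \<in> colon R I (max_ideal R)"
    if "n \<in> S" "\<forall>h\<in>HZ. h \<noteq> 0 \<longrightarrow> n + h \<in> E" for n
  proof -
    have "fls_X_intpow n \<in> R" using that X_in_R by (auto simp: S_def HZ_def R_def)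
    moreover have "fls_X_intpow n * m \<in> I" if m: "m \<in> max_ideal R" for m
    proof -
      have mR: "m \<in> R" and m0: "m $$ 0 = 0" using m by (auto simp: max_ideal_def)
      have fin: "finite (supp m)" and sm: "supp m \<subseteq> HZ" using mR by (auto simp: R_iff R_def HZ_def)
      have "supp (fls_X_intpow n * m) = (\<lambda>k. k + n) ` supp m"
        by (force simp: supp_def image_iff)
      then have "finite (supp (fls_X_intpow n * m))" using fin by simp
      moreover have "supp (fls_X_intpow n * m) \<subseteq> E"
      proof
        fix k assume "k \<in> supp (fls_X_intpow n * m)"
        then have "m $$ (k - n) \<noteq> 0" by (simp add: supp_def)
        then have "k - n \<in> HZ" "k - n \<noteq> 0" using sm m0 by (auto simp: supp_def)
        then have "n + (k - n) \<in> E" using \<open>\<forall>h\<in>HZ. h \<noteq> 0 \<longrightarrow> n + h \<in> E\<close> by blast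
        then show "k \<in> E" by simp
      qed
      ultimately show ?thesis using Imon by (simp add: monid_def)
    qed
    ultimately show ?thesis by (simp add: colon_def)
  qed
  have bsoc: "\<forall>h\<in>HZ. h \<noteq> 0 \<longrightarrow> b + h \<in> E"
  proof (intro ballI impI)
    fix h assume h: "h \<in> HZ" "h \<noteq> 0"
    show "b + h \<in> E"
    proof (rule ccontr)
      assume "b + h \<notin> E"
      then have "b + h \<in> S" using HZadd[of b h] bS h by (auto simp: S_def)
      then have "b + h \<le> b" using finS unfolding b_def by (rule Max_ge[rotated])
      then show False using HZnn[OF h(1)] h(2) by simp
    qed
  qed
  have socle_unique: "n = b" if n: "n \<in> S" "\<forall>h\<in>HZ. h \<noteq> 0 \<longrightarrow> n + h \<in> E" for n
  proof (rule ccontr)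
    assume nb: "n \<noteq> b"
    obtain c1 where c1: "fls_X_intpow n - fls_const c1 * s \<in> I" using sall soc_colon[OF n] by blast
    obtain c2 where c2: "fls_X_intpow b - fls_const c2 * s \<in> I" using sall soc_colon[OF bS bsoc] by blast
    have e1: "1 - c1 * s $$ n = 0" using Ivan[OF c1 n(1)] by simp
    have e2: "0 - c1 * s $$ b = 0" using Ivan[OF c1 bS] nb by simp
    have e3: "1 - c2 * s $$ b = 0" using Ivan[OF c2 bS] by simp
    from e1 have "c1 \<noteq> 0" by auto
    with e2 have "s $$ b = 0" by simp
    with e3 show False by simp
  qed
  have Schar: "n \<in> S \<longleftrightarrow> b - n \<in> HZ" if nH: "n \<in> HZ" for n
  proof
    assume nS: "n \<in> S"
    define T where "T = {m \<in> S. m - n \<in> HZ}"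
    have finT: "finite T" using finS by (simp add: T_def)
    have nT: "n \<in> T" using nS HZ0 by (simp add: T_def)
    define m where "m = Max T"
    have mT: "m \<in> T" using finT nT unfolding m_def by (intro Max_in) auto
    have "\<forall>h\<in>HZ. h \<noteq> 0 \<longrightarrow> m + h \<in> E"
    proof (intro ballI impI)
      fix h assume h: "h \<in> HZ" "h \<noteq> 0"
      show "m + h \<in> E"
      proof (rule ccontr)
        assume "m + h \<notin> E"
        moreover have "m + h \<in> HZ" using HZadd[of m h] mT h by (auto simp: T_def S_def)
        moreover have "m + h - n \<in> HZ" using HZadd[of "m - n" h] mT h by (auto simp: T_def algebra_simps)
        ultimately have "m + h \<in> T" by (simp add: T_def S_def)
        then have "m + h \<le> m" using finT unfolding m_def by (rule Max_ge[rotated])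
        then show False using HZnn[OF h(1)] h(2) by simp
      qed
    qed
    then have "m = b" using socle_unique mT by (simp add: T_def)
    then show "b - n \<in> HZ" using mT by (simp add: T_def)
  next
    assume bn: "b - n \<in> HZ"
    show "n \<in> S"
    proof (rule ccontr)
      assume "n \<notin> S"
      then have "n \<in> E" using nH by (simp add: S_def)
      then have "n + (b - n) \<in> E" using Ecl bn by blast
      then show False using bS by (simp add: S_def)
    qed
  qed
  have "E = {n \<in> HZ. b - n \<notin> HZ}"
    using Schar EH by (auto simp: S_def)
  then show ?thesis using aq bS Imon by (simp add: R_def HZ_def S_def)
qed

lemma monid_gor:
  assumes ns: "numerical_semigroup H" and sig: "\<sigma> \<in> int ` H"
  shows "gorenstein_quot (semigroup_ring H) (monid {n \<in> int ` H. \<sigma> - n \<notin> int ` H} :: 'k::field fls set)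
    \<and> a_quot (semigroup_ring H) (monid {n \<in> int ` H. \<sigma> - n \<notin> int ` H} :: 'k::field fls set) = \<sigma>"
proof -
  define HZ where "HZ = int ` H"
  define R where "R = (semigroup_ring H :: 'k fls set)"
  define E where "E = {n \<in> HZ. \<sigma> - n \<notin> HZ}"
  define J where "J = (monid E :: 'k fls set)"
  define S where "S = {n \<in> HZ. \<sigma> - n \<in> HZ}"
  have HZ0: "0 \<in> HZ" using ns_0[OF ns] by (simp add: HZ_def)
  have HZadd: "x + y \<in> HZ" if "x \<in> HZ" "y \<in> HZ" for x y using ns_add[OF ns] that by (simp add: HZ_def)
  have HZnn: "x \<ge> 0" if "x \<in> HZ" for x using that by (auto simp: HZ_def)
  have sH: "\<sigma> \<in> HZ" using sig by (simp add: HZ_def)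
  have EH: "E \<subseteq> HZ" by (auto simp: E_def)
  have finS: "finite S"
  proof (rule finite_subset)
    show "S \<subseteq> {0..\<sigma>}" using HZnn by (force simp: S_def)
  qed simp
  have art: "artinian_quot R J"
    unfolding artinian_quot_def
  proof (intro exI[of _ "fls_X_intpow ` S"] conjI ballI)
    show "finite (fls_X_intpow ` S :: 'k fls set)" using finS by simp
    show "(fls_X_intpow ` S :: 'k fls set) \<subseteq> R" using X_in_R by (auto simp: S_def HZ_def R_def)
    fix f assume f: "f \<in> R"
    have inj: "inj_on (fls_X_intpow :: int \<Rightarrow> 'k fls) S"
      by (rule inj_onI) (metis fls_subdegree_fls_X_intpow)
    define g where "g = f - (\<Sum>b\<in>fls_X_intpow ` S. fls_const (f $$ fls_subdegree b) * b)"
    have g: "g = f - (\<Sum>n\<in>S. fls_const (f $$ n) * fls_X_intpow n)"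
      unfolding g_def by (simp add: sum.reindex[OF inj])
    have gn: "g $$ k = (if k \<in> S then 0 else f $$ k)" for k
    proof -
      have "(\<Sum>n\<in>S. (fls_const (f $$ n) * fls_X_intpow n) $$ k) = (\<Sum>n\<in>S. if k = n then f $$ n else 0)"
        by (rule sum.cong) auto
      also have "\<dots> = (if k \<in> S then f $$ k else 0)" using finS by simp
      finally show ?thesis by (simp add: g fls_nth_sum)
    qed
    have finf: "finite (supp f)" and sf: "supp f \<subseteq> HZ" using f by (auto simp: R_iff R_def HZ_def)
    have "supp g \<subseteq> supp f" by (auto simp: supp_def gn split: if_splits)
    moreover have "supp g \<subseteq> E"
      using sf by (auto simp: supp_def gn E_def S_def split: if_splits)
    ultimately have "g \<in> J" using finf by (auto simp: J_def monid_def intro: finite_subset)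
    then show "\<exists>c. f - (\<Sum>b\<in>fls_X_intpow ` S. fls_const (c b) * b) \<in> J"
      unfolding g_def by (rule exI[of _ "\<lambda>b. f $$ fls_subdegree b"])
  qed
  have sJ: "fls_X_intpow \<sigma> \<notin> J" using HZ0 by (auto simp: J_def monid_def supp_def E_def)
  have sR: "fls_X_intpow \<sigma> \<in> R" using X_in_R sig by (simp add: R_def)
  have scol: "fls_X_intpow \<sigma> \<in> colon R J (max_ideal R)"
  proof -
    have "fls_X_intpow \<sigma> * m \<in> J" if m: "m \<in> max_ideal R" for m
    proof -
      have mR: "m \<in> R" and m0: "m $$ 0 = 0" using m by (auto simp: max_ideal_def)
      have fin: "finite (supp m)" and sm: "supp m \<subseteq> HZ" using mR by (auto simp: R_iff R_def HZ_def)
      have "supp (fls_X_intpow \<sigma> * m) = (\<lambda>k. k + \<sigma>) ` supp m"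
        by (force simp: supp_def image_iff)
      then have "finite (supp (fls_X_intpow \<sigma> * m))" using fin by simp
      moreover have "supp (fls_X_intpow \<sigma> * m) \<subseteq> E"
      proof
        fix k assume "k \<in> supp (fls_X_intpow \<sigma> * m)"
        then have "m $$ (k - \<sigma>) \<noteq> 0" by (simp add: supp_def)
        then have h: "k - \<sigma> \<in> HZ" "k - \<sigma> \<noteq> 0" using sm m0 by (auto simp: supp_def)
        have "\<sigma> + (k - \<sigma>) \<in> HZ" using HZadd[OF sH h(1)] .
        moreover have "\<sigma> - k \<notin> HZ" using HZnn[OF h(1)] h(2) HZnn[of "\<sigma> - k"] by auto
        ultimately show "k \<in> E" by (simp add: E_def)
      qed
      ultimately show ?thesis by (simp add: J_def monid_def)
    qed
    then show ?thesis using sR by (simp add: colon_def)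
  qed
  have call: "\<exists>c. f - fls_const c * fls_X_intpow \<sigma> \<in> J" if f: "f \<in> colon R J (max_ideal R)" for f
  proof (intro exI[of _ "f $$ \<sigma>"])
    define g where "g = f - fls_const (f $$ \<sigma>) * fls_X_intpow \<sigma>"
    have fR: "f \<in> R" using f by (simp add: colon_def)
    have finf: "finite (supp f)" and sf: "supp f \<subseteq> HZ" using fR by (auto simp: R_iff R_def HZ_def)
    have gn: "g $$ k = (if k = \<sigma> then 0 else f $$ k)" for k by (simp add: g_def)
    have "supp g \<subseteq> supp f" by (auto simp: supp_def gn split: if_splits)
    moreover have "supp g \<subseteq> E"
    proof
      fix k assume k: "k \<in> supp g"
      then have ks: "k \<noteq> \<sigma>" and fk: "f $$ k \<noteq> 0" by (auto simp: supp_def gn split: if_splits)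
      then have kH: "k \<in> HZ" using sf by (auto simp: supp_def)
      show "k \<in> E"
      proof (rule ccontr)
        assume "k \<notin> E"
        then have d: "\<sigma> - k \<in> HZ" using kH by (simp add: E_def)
        have "fls_X_intpow (\<sigma> - k) \<in> max_ideal R"
          using X_in_R[of "\<sigma> - k" H] d ks by (simp add: max_ideal_def R_def HZ_def)
        then have "f * fls_X_intpow (\<sigma> - k) \<in> J" using f by (simp add: colon_def)
        then have "fls_X_intpow (\<sigma> - k) * f \<in> J" by (simp only: fls_X_intpow_times_comm)
        moreover have "(fls_X_intpow (\<sigma> - k) * f) $$ \<sigma> \<noteq> 0" using fk by simp
        ultimately have "\<sigma> \<in> E" by (auto simp: J_def monid_def supp_def)
        then show False using HZ0 by (simp add: E_def)
      qed
    qed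
    ultimately show "g \<in> J" using finf by (auto simp: J_def monid_def intro: finite_subset)
  qed
  have gor: "gorenstein_quot R J"
    unfolding gorenstein_quot_def using art scol sJ call by blast
  have aq: "a_quot R J = \<sigma>"
    unfolding a_quot_def
  proof (rule Greatest_equality)
    show "quot_comp_nonzero R J \<sigma>"
      using qcn_monid[OF EH[unfolded HZ_def], where 'k='k] sH HZ0
      by (simp add: R_def J_def HZ_def E_def)
    fix y assume "quot_comp_nonzero R J y"
    then have "y \<in> HZ" "\<sigma> - y \<in> HZ" using qcn_monid[OF EH[unfolded HZ_def], where 'k='k]
      by (auto simp: R_def J_def HZ_def E_def)
    then show "y \<le> \<sigma>" using HZnn by force
  qed
  show ?thesis using gor aq by (simp add: R_def J_def E_def HZ_def)
qed

lemma ideal_gen_unit: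
  fixes u v :: "'k::field fls"
  assumes uv: "v * u = 1"
  shows "ideal_gen R ((*) u ` G) = (*) u ` ideal_gen R G"
proof -
  have inj: "inj_on ((*) u) G"
    by (rule inj_onI) (metis mult.assoc mult_1 uv)
  show ?thesis
  proof
    show "ideal_gen R ((*) u ` G) \<subseteq> (*) u ` ideal_gen R G"
    proof
      fix x assume "x \<in> ideal_gen R ((*) u ` G)"
      then obtain c where x: "x = (\<Sum>g\<in>(*) u ` G. c g * g)" and c: "\<forall>g\<in>(*) u ` G. c g \<in> R"
        by (auto simp: ideal_gen_def)
      have "x = (\<Sum>g\<in>G. c (u * g) * (u * g))" unfolding x by (simp add: sum.reindex[OF inj])
      also have "\<dots> = u * (\<Sum>g\<in>G. c (u * g) * g)"
        by (simp add: sum_distrib_left mult.left_commute)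
      finally have "x = u * (\<Sum>g\<in>G. c (u * g) * g)" .
      moreover have "(\<Sum>g\<in>G. c (u * g) * g) \<in> ideal_gen R G"
        unfolding ideal_gen_def using c by (intro CollectI exI[of _ "\<lambda>g. c (u * g)"]) auto
      ultimately show "x \<in> (*) u ` ideal_gen R G" by blast
    qed
    show "(*) u ` ideal_gen R G \<subseteq> ideal_gen R ((*) u ` G)"
    proof
      fix x assume "x \<in> (*) u ` ideal_gen R G"
      then obtain c where x: "x = u * (\<Sum>g\<in>G. c g * g)" and c: "\<forall>g\<in>G. c g \<in> R"
        by (auto simp: ideal_gen_def)
      define c' where "c' = (\<lambda>g. c (v * g))"
      have vu: "v * (u * g) = g" for g by (simp add: mult.assoc[symmetric] uv)
      have "(\<Sum>g\<in>(*) u ` G. c' g * g) = (\<Sum>g\<in>G. c g * (u * g))"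
        by (simp add: sum.reindex[OF inj] c'_def vu)
      also have "\<dots> = x" unfolding x by (simp add: sum_distrib_left mult.left_commute)
      finally have "x = (\<Sum>g\<in>(*) u ` G. c' g * g)" by simp
      moreover have "\<forall>g\<in>(*) u ` G. c' g \<in> R" using c by (auto simp: c'_def vu)
      ultimately show "x \<in> ideal_gen R ((*) u ` G)" unfolding ideal_gen_def by blast
    qed
  qed
qed

lemma gens_unit:
  fixes u v :: "'k::field fls"
  assumes uv: "v * u = 1"
    and "\<exists>G. finite G \<and> card G = m \<and> G \<subseteq> I \<and> ideal_gen R G = I"
  shows "\<exists>G. finite G \<and> card G = m \<and> G \<subseteq> (*) u ` I \<and> ideal_gen R G = (*) u ` I"
proof -
  obtain G where G: "finite G" "card G = m" "G \<subseteq> I" "ideal_gen R G = I" using assms(2) by blast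
  have inj: "inj_on ((*) u) G"
    by (rule inj_onI) (metis mult.assoc mult_1 uv)
  show ?thesis
    apply (rule exI[of _ "(*) u ` G"])
    using G card_image[OF inj] ideal_gen_unit[OF uv, of R G] by auto
qed

lemma mu_unit:
  fixes u v :: "'k::field fls"
  assumes uv: "v * u = 1"
  shows "mu R (times u ` I) = mu R I"
proof -
  have uv2: "u * v = 1" using uv by (simp add: mult.commute)
  have bk: "times v ` (times u ` I) = I"
    by (force simp: image_iff mult.assoc[symmetric] uv)
  have "(\<exists>G. finite G \<and> card G = m \<and> G \<subseteq> times u ` I \<and> ideal_gen R G = times u ` I) \<longleftrightarrow>
        (\<exists>G. finite G \<and> card G = m \<and> G \<subseteq> I \<and> ideal_gen R G = I)" for m
    using gens_unit[OF uv, of m I R] gens_unit[OF uv2, of m "times u ` I" R] bk by auto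
  then show ?thesis unfolding mu_def by simp
qed

lemma shift_graded:
  fixes I :: "'k::field fls set"
  assumes gi: "is_graded_ideal R I" and JR: "(*) (fls_X_intpow c) ` I \<subseteq> R"
  shows "is_graded_ideal R ((*) (fls_X_intpow c) ` I)"
proof -
  let ?u = "fls_X_intpow c :: 'k fls"
  have id: "is_ideal R I" and gr: "\<forall>f\<in>I. \<forall>n. fls_const (f $$ n) * fls_X_intpow n \<in> I"
    using gi by (auto simp: is_graded_ideal_def)
  have "0 \<in> (*) ?u ` I" using id by (force simp: is_ideal_def)
  moreover have "f + g \<in> (*) ?u ` I" if H1: "f \<in> (*) ?u ` I" and H2: "g \<in> (*) ?u ` I" for f g
  proof -
    obtain f' where "f = ?u * f'" "f' \<in> I" using H1 by blast
    moreover obtain g' where "g = ?u * g'" "g' \<in> I" using H2 by blast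
    ultimately have "f + g = ?u * (f' + g')" "f' + g' \<in> I" using id by (auto simp: is_ideal_def distrib_left)
    then show ?thesis by blast
  qed
  moreover have "r * f \<in> (*) ?u ` I" if H0: "r \<in> R" and H1: "f \<in> (*) ?u ` I" for r f
  proof -
    obtain f' where "f = ?u * f'" "f' \<in> I" using H1 by blast
    then have "r * f = ?u * (r * f')" "r * f' \<in> I" using id H0 by (auto simp: is_ideal_def mult.left_commute)
    then show ?thesis by blast
  qed
  moreover have "fls_const (f $$ n) * fls_X_intpow n \<in> (*) ?u ` I" if H1: "f \<in> (*) ?u ` I" for f n
  proof -
    obtain f' where f: "f = ?u * f'" "f' \<in> I" using H1 by blast
    have "fls_const (f $$ n) * fls_X_intpow n = ?u * (fls_const (f' $$ (n - c)) * fls_X_intpow (n - c))"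
      by (rule fls_eqI) (simp add: f(1))
    moreover have "fls_const (f' $$ (n - c)) * fls_X_intpow (n - c) \<in> I" using gr f(2) by blast
    ultimately show ?thesis by (rule image_eqI)
  qed
  ultimately show ?thesis using JR by (simp add: is_graded_ideal_def is_ideal_def)
qed

theorem corollary4p1:
  fixes H :: "nat set" and I :: "'k::field fls set"
  defines "R \<equiv> (semigroup_ring H :: 'k fls set)"
  defines "a \<equiv> a_inv H"
  defines "J \<equiv> (\<lambda>f. fls_X_intpow (a - a_quot R I) * f) ` I"
  assumes "numerical_semigroup H"
    and "symmetric_sg H"
    and "I \<in> X_R R"
  shows "(J \<in> X_R R \<and> a_quot R J = 2 * a - a_quot R I
          \<and> (a_quot R I < a \<longrightarrow> a_quot R J > a)
          \<and> (a_quot R I > a \<longrightarrow> a_quot R J < a))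
       \<and> (a_quot R I \<in> int ` H \<and> a \<noteq> a_quot R I \<and> a - a_quot R I \<notin> int ` H)
       \<and> (a_quot R I < a \<longrightarrow> a - a_quot R I \<ge> 0 \<and> a - a_quot R I \<notin> int ` H)
       \<and> (a_quot R I > a \<longrightarrow> a_quot R I - a \<ge> 0 \<and> a_quot R I - a \<notin> int ` H)"
proof -
  note ns = assms(4)
  define HZ where "HZ = int ` H"
  define b where "b = a_quot R I"
  have HZ0: "0 \<in> HZ" using ns_0[OF ns] by (simp add: HZ_def)
  have HZadd: "x + y \<in> HZ" if "x \<in> HZ" "y \<in> HZ" for x y using ns_add[OF ns] that by (simp add: HZ_def)
  have symz: "z \<in> HZ \<longleftrightarrow> a - z \<notin> HZ" for z
    using assms(5) unfolding symmetric_sg_def HZ_def a_def by blast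
  have aH: "a \<notin> HZ" using symz[of 0] HZ0 by simp
  have gi: "is_graded_ideal R I" and gor: "gorenstein_quot R I" and mu2: "mu R I \<ge> 2"
    using assms(6) by (auto simp: X_R_def)
  define E where "E = {n \<in> HZ. b - n \<notin> HZ}"
  have bH: "b \<in> HZ" and Imon: "I = monid E"
    using I_structure[OF ns gi[unfolded R_def] gor[unfolded R_def]]
    by (simp_all add: b_def R_def HZ_def E_def)
  have amb: "a - b \<notin> HZ" using symz[of b] bH by simp
  have bma: "b - a \<notin> HZ"
  proof
    assume dH: "b - a \<in> HZ"
    define d where "d = b - a"
    have d: "d \<in> HZ" using dH by (simp add: d_def)
    have XdI: "fls_X_intpow d \<in> I"
    proof -
      have "b - d \<notin> HZ" using aH by (simp add: d_def)
      then show ?thesis using d by (auto simp: Imon monid_def supp_def E_def)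
    qed
    have gen: "ideal_gen R {fls_X_intpow d} = I"
    proof
      show "ideal_gen R {fls_X_intpow d} \<subseteq> I"
      proof
        fix x assume "x \<in> ideal_gen R {fls_X_intpow d}"
        then obtain r where x: "x = r * fls_X_intpow d" and r: "r \<in> R"
          by (auto simp: ideal_gen_def)
        have fin: "finite (supp r)" and sr: "supp r \<subseteq> HZ" using r by (auto simp: R_def R_iff HZ_def)
        have xx: "x = fls_X_intpow d * r" by (simp add: x fls_X_intpow_times_conv_shift)
        have "supp x = (\<lambda>k. k + d) ` supp r" by (force simp: xx supp_def image_iff)
        then have "finite (supp x)" using fin by simp
        moreover have "supp x \<subseteq> E"
        proof
          fix n assume "n \<in> supp x"
          then have "n - d \<in> HZ" using sr by (auto simp: xx supp_def)
          moreover have "n = d + (n - d)" by simp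
          ultimately have "n \<in> HZ" using HZadd[OF d] by metis
          moreover have "b - n \<notin> HZ" using symz[of "n - d"] \<open>n - d \<in> HZ\<close> by (simp add: d_def)
          ultimately show "n \<in> E" by (simp add: E_def)
        qed
        ultimately show "x \<in> I" by (simp add: Imon monid_def)
      qed
      show "I \<subseteq> ideal_gen R {fls_X_intpow d}"
      proof
        fix f assume f: "f \<in> I"
        then have fin: "finite (supp f)" and sf: "supp f \<subseteq> E" by (auto simp: Imon monid_def)
        define r where "r = fls_X_intpow (-d) * f"
        have "supp r = (\<lambda>k. k - d) ` supp f" by (force simp: r_def supp_def image_iff)
        then have "finite (supp r)" using fin by simp
        moreover have "supp r \<subseteq> HZ"
        proof
          fix n assume "n \<in> supp r"
          then have "n + d \<in> E" using sf by (auto simp: r_def supp_def)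
          then have "b - (n + d) \<notin> HZ" by (simp add: E_def)
          then show "n \<in> HZ" using symz[of "b - (n + d)"] by (simp add: d_def)
        qed
        ultimately have rR: "r \<in> R" by (simp add: R_def R_iff HZ_def)
        have "f = r * fls_X_intpow d" by (simp add: r_def fls_X_intpow_times_comm[symmetric] XXinv2)
        then show "f \<in> ideal_gen R {fls_X_intpow d}"
          using rR by (auto simp: ideal_gen_def intro!: exI[of _ "\<lambda>_. r"])
      qed
    qed
    have "mu R I \<le> 1"
      unfolding mu_def
      by (rule Least_le) (intro exI[of _ "{fls_X_intpow d}"], use XdI gen in auto)
    then show False using mu2 by simp
  qed
  define \<sigma> where "\<sigma> = 2 * a - b"
  have sH: "\<sigma> \<in> HZ" using symz[of "b - a"] bma by (simp add: \<sigma>_def)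
  define c where "c = a - b"
  define E' where "E' = {n \<in> HZ. \<sigma> - n \<notin> HZ}"
  have Jc: "J = (*) (fls_X_intpow c) ` I" by (simp add: J_def c_def b_def)
  have Jmon: "J = monid E'"
  proof
    show "J \<subseteq> monid E'"
    proof
      fix g assume "g \<in> J"
      then obtain f where g: "g = fls_X_intpow c * f" and f: "f \<in> I" using Jc by blast
      then have fin: "finite (supp f)" and sf: "supp f \<subseteq> E" by (auto simp: Imon monid_def)
      have "supp g = (\<lambda>k. k + c) ` supp f" by (force simp: g supp_def image_iff)
      then have "finite (supp g)" using fin by simp
      moreover have "supp g \<subseteq> E'"
      proof
        fix n assume "n \<in> supp g"
        then have "n - c \<in> E" using sf by (auto simp: g supp_def)
        then have 1: "n - c \<in> HZ" and 2: "b - (n - c) \<notin> HZ" by (auto simp: E_def)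
        have e1: "b - (n - c) = a - n" by (simp add: c_def)
        from 2 have 3: "n \<in> HZ" using symz[of n] unfolding e1 by blast
        have e2: "\<sigma> - n = a - (n - c)" by (simp add: c_def \<sigma>_def)
        have "\<sigma> - n \<notin> HZ" using symz[of "n - c"] 1 unfolding e2 by blast
        with 3 show "n \<in> E'" by (simp add: E'_def)
      qed
      ultimately show "g \<in> monid E'" by (simp add: monid_def)
    qed
    show "monid E' \<subseteq> J"
    proof
      fix g assume "g \<in> (monid E' :: 'k fls set)"
      then have fin: "finite (supp g)" and sg: "supp g \<subseteq> E'" by (auto simp: monid_def)
      define f where "f = fls_X_intpow (-c) * g"
      have "supp f = (\<lambda>k. k - c) ` supp g" by (force simp: f_def supp_def image_iff)
      then have "finite (supp f)" using fin by simp
      moreover have "supp f \<subseteq> E"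
      proof
        fix k assume "k \<in> supp f"
        then have "k + c \<in> E'" using sg by (auto simp: f_def supp_def)
        then have 1: "k + c \<in> HZ" and 2: "\<sigma> - (k + c) \<notin> HZ" by (auto simp: E'_def)
        have e1: "\<sigma> - (k + c) = a - k" by (simp add: c_def \<sigma>_def)
        from 2 have 3: "k \<in> HZ" using symz[of k] unfolding e1 by blast
        have e2: "a - (b - k) = k + c" by (simp add: c_def)
        have "b - k \<notin> HZ" using symz[of "b - k"] 1 unfolding e2 by blast
        with 3 show "k \<in> E" by (simp add: E_def)
      qed
      ultimately have "f \<in> I" by (simp add: Imon monid_def)
      moreover have "g = fls_X_intpow c * f" by (simp add: f_def XXinv2)
      ultimately show "g \<in> J" using Jc by blast
    qed
  qed
  have E'H: "E' \<subseteq> int ` H" by (auto simp: E'_def HZ_def)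
  have JR: "J \<subseteq> R" using monid_R[OF E'H] by (simp add: Jmon R_def)
  have giJ: "is_graded_ideal R J" using shift_graded[OF gi JR[unfolded Jc]] by (simp add: Jc)
  have gJ: "gorenstein_quot R J \<and> a_quot R J = \<sigma>"
    using monid_gor[OF ns sH[unfolded HZ_def], where 'k='k] by (simp add: Jmon R_def E'_def HZ_def)
  have "fls_X_intpow (-c) * fls_X_intpow c = (1 :: 'k fls)" by (simp add: XX)
  then have muJ: "mu R J = mu R I" unfolding Jc by (rule mu_unit)
  have "J \<in> X_R R" using giJ gJ muJ mu2 by (simp add: X_R_def)
  moreover have "a_quot R J = 2 * a - b" using gJ by (simp add: \<sigma>_def)
  moreover have "a \<noteq> b" using aH bH by auto
  ultimately show ?thesis using bH amb bma
    unfolding b_def[symmetric] HZ_def[symmetric] by auto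
qed

end
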